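(* Let $D \ge 1$ and let $L \colon \mathbb{Z}^D \times \mathbb{R}_+ \to \mathbb{R}$ be a discrete scale-space representation of a discrete signal $f \colon \mathbb{Z}^D \to \mathbb{R}$. Then $L$ satisfies the differential equation $$\partial_s L = \mathcal{A} L, \qquad (\mathcal{A} L)(x;s) = \sum_{\xi \in \mathbb{Z}^D} a_\xi \, L(x+\xi;s),$$ with initial condition $L(\cdot;0) = f(\cdot)$, for some infinitesimal scale-space generator $\mathcal{A}$ whose coefficients $a_\xi \in \mathbb{R}$ satisfy: (i) the locality condition: $a_\xi = 0$ if $|\xi|_\infty > 1$; (ii) the positivity constraint: $a_\xi \ge 0$ if $\xi \ne 0$; (iii) the zero sum condition: $\sum_{\xi \in \mathbb{Z}^D} a_\xi = 0$.
   Context: A one-parameter family of kernels $T \colon \mathbb{Z}^D \times \mathbb{R}_+ \to \mathbb{R}$ is a discrete pre-scale-space family of kernels if $T(\cdot;0) = \delta(\cdot)$ (discrete delta), $T(\cdot;s_1) * T(\cdot;s_2) = T(\cdot;s_1+s_2)$ for all $s_1, s_2 \ge 0$, and $\|T(\cdot;s) - \delta(\cdot)\|_1 \to 0$ as $s \downarrow 0$. The discrete pre-scale-space representation of $f$ generated by $T$ is $L(x;s) = \sum_{\xi \in \mathbb{Z}^D} T(\xi;s) f(x-\xi)$. Such an $L$ possesses pre-scale-space properties (does not enhance local extrema) if for every $s_0 \in \mathbb{R}_+$: whenever $x_0 \in \mathbb{Z}^D$ is a local maximum of $x \mapsto L(x;s_0)$ then $\partial_s L(x_0;s_0) \le 0$,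 and whenever $x_0$ is a local minimum then $\partial_s L(x_0;s_0) \ge 0$. Local extrema are understood in the weak (non-strict) sense with respect to the neighbourhood $\{x : \|x - x_0\|_\infty = 1\}$, i.e. $x_0$ is a local maximum if $L(x_0;s_0) \ge L(x;s_0)$ for all $x$ with $\|x-x_0\|_\infty = 1$ (analogously for minima). A discrete pre-scale-space family $T$ is a discrete scale-space family of kernels if for every discrete signal $f \in l_1$ the pre-scale-space representation of $f$ generated by $T$ possesses pre-scale-space properties. A discrete scale-space representation of $f$ is a discrete pre-scale-space representation of $f$ generated by a discrete scale-space family of kernels. *)

theory Defs
  imports "HOL-Analysis.Analysis"
begin

text \<open>The lattice Z^D is modelled as int ^ 'n for a finite index type 'n (D = CARD('n) \<ge> 1).\<close>

definition ddelta :: "int ^ 'n \<Rightarrow> real" where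
  "ddelta x = (if x = 0 then 1 else 0)"

definition linf :: "int ^ 'n::finite \<Rightarrow> int" where
  "linf x = Max (range (\<lambda>i. \<bar>x $ i\<bar>))"

definition dconv :: "(int ^ 'n \<Rightarrow> real) \<Rightarrow> (int ^ 'n \<Rightarrow> real) \<Rightarrow> int ^ 'n \<Rightarrow> real" where
  "dconv g h x = (\<Sum>\<^sub>\<infinity>\<xi>. g \<xi> * h (x - \<xi>))"

definition l1norm :: "(int ^ 'n \<Rightarrow> real) \<Rightarrow> real" where
  "l1norm g = (\<Sum>\<^sub>\<infinity>x. \<bar>g x\<bar>)"

text \<open>Kernels T(.;s) for s \<ge> 0 (values for s < 0 are irrelevant); kernels are taken in l1.\<close>
definition pre_scale_space_kernels :: "(int ^ 'n \<Rightarrow> real \<Rightarrow> real) \<Rightarrow> bool" where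
  "pre_scale_space_kernels T \<longleftrightarrow>
     (\<forall>s\<ge>0. (\<lambda>x. \<bar>T x s\<bar>) summable_on UNIV) \<and>
     (\<forall>x. T x 0 = ddelta x) \<and>
     (\<forall>s1\<ge>0. \<forall>s2\<ge>0. \<forall>x. dconv (\<lambda>\<xi>. T \<xi> s1) (\<lambda>\<xi>. T \<xi> s2) x = T x (s1 + s2)) \<and>
     ((\<lambda>s. l1norm (\<lambda>x. T x s - ddelta x)) \<longlongrightarrow> 0) (at_right 0)"

definition pre_scale_space_rep ::
  "(int ^ 'n \<Rightarrow> real \<Rightarrow> real) \<Rightarrow> (int ^ 'n \<Rightarrow> real) \<Rightarrow> int ^ 'n \<Rightarrow> real \<Rightarrow> real" where
  "pre_scale_space_rep T f x s = (\<Sum>\<^sub>\<infinity>\<xi>. T \<xi> s * f (x - \<xi>))"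

text \<open>Non-enhancement of local extrema (weak extrema w.r.t. the sup-norm ring);
  the scale derivative is taken one-sidedly within [0,\<infinity>).\<close>
definition has_pre_scale_space_props :: "(int ^ 'n::finite \<Rightarrow> real \<Rightarrow> real) \<Rightarrow> bool" where
  "has_pre_scale_space_props L \<longleftrightarrow>
     (\<forall>s0\<ge>0. \<forall>x0.
        ((\<forall>x. linf (x - x0) = 1 \<longrightarrow> L x s0 \<le> L x0 s0) \<longrightarrow>
           (\<forall>d. ((\<lambda>s. L x0 s) has_real_derivative d) (at s0 within {0..}) \<longrightarrow> d \<le> 0)) \<and>
        ((\<forall>x. linf (x - x0) = 1 \<longrightarrow> L x s0 \<ge> L x0 s0) \<longrightarrow>
           (\<forall>d. ((\<lambda>s. L x0 s) has_real_derivative d) (at s0 within {0..}) \<longrightarrow> d \<ge> 0)))"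

definition scale_space_kernels :: "(int ^ 'n::finite \<Rightarrow> real \<Rightarrow> real) \<Rightarrow> bool" where
  "scale_space_kernels T \<longleftrightarrow> pre_scale_space_kernels T \<and>
     (\<forall>f :: int ^ 'n \<Rightarrow> real. (\<lambda>x. \<bar>f x\<bar>) summable_on UNIV \<longrightarrow>
        has_pre_scale_space_props (pre_scale_space_rep T f))"

end

theory Submission
  imports Defs
begin

lemma bij_add_c: "bij_betw (\<lambda>x::'a::ab_group_add. x + c) UNIV UNIV"
  by (rule bij_betwI[of _ _ _ "\<lambda>x. x - c"]) auto
lemma bij_diff_c: "bij_betw (\<lambda>x::'a::ab_group_add. x - c) UNIV UNIV"
  by (rule bij_betwI[of _ _ _ "\<lambda>x. x + c"]) auto
lemma bij_c_diff: "bij_betw (\<lambda>x::'a::ab_group_add. c - x) UNIV UNIV"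
  by (rule bij_betwI[of _ _ _ "\<lambda>x. c - x"]) auto
lemma bij_uminus_g: "bij_betw (\<lambda>x::'a::ab_group_add. - x) UNIV UNIV"
  by (rule bij_betwI[of _ _ _ "\<lambda>x. - x"]) auto

lemma summable_abs_real:
  fixes g :: "'a \<Rightarrow> real"
  assumes "g summable_on A" shows "(\<lambda>x. \<bar>g x\<bar>) summable_on A"
  using assms summable_on_iff_abs_summable_on_real[of g A] by (simp add: real_norm_def)

lemma abs_summable_real:
  fixes g :: "'a \<Rightarrow> real"
  assumes "(\<lambda>x. \<bar>g x\<bar>) summable_on A" shows "g summable_on A"
  using assms summable_on_iff_abs_summable_on_real[of g A] by (simp add: real_norm_def)

lemma summable_on_diff_real:
  fixes g h :: "'a \<Rightarrow> real"
  assumes "g summable_on A" "h summable_on A" shows "(\<lambda>x. g x - h x) summable_on A"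
  using summable_on_add[OF assms(1), of "\<lambda>x. - h x"] summable_on_uminus[of h A] assms by simp

lemma infsum_diff_real:
  fixes g h :: "'a \<Rightarrow> real"
  assumes "g summable_on A" "h summable_on A" shows "infsum (\<lambda>x. g x - h x) A = infsum g A - infsum h A"
  using infsum_add[OF assms(1), of "\<lambda>x. - h x"] summable_on_uminus[of h A] assms infsum_uminus[of h A] by simp

lemma abs_le_infsum:
  fixes g :: "'a \<Rightarrow> real"
  assumes "g summable_on UNIV" shows "\<bar>g x\<bar> \<le> infsum (\<lambda>x. \<bar>g x\<bar>) UNIV"
proof -
  have "infsum (\<lambda>y. \<bar>g y\<bar>) {x} \<le> infsum (\<lambda>x. \<bar>g x\<bar>) UNIV"
    by (rule infsum_mono_neutral) (auto intro: summable_abs_real assms)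
  then show ?thesis by simp
qed

lemma product_summable:
  fixes g h :: "'a \<Rightarrow> real"
  assumes "g summable_on UNIV" "h summable_on UNIV"
  shows "(\<lambda>(a,b). g a * h b) summable_on UNIV"
proof -
  have "(\<lambda>p. norm (g (fst p) * h (snd p))) summable_on Sigma UNIV (\<lambda>_. UNIV)"
  proof (rule Infinite_Sum.abs_summable_on_Sigma_iff[THEN iffD2], intro conjI ballI)
    fix a :: 'a
    show "(\<lambda>b. norm (g (fst (a,b)) * h (snd (a,b)))) summable_on UNIV"
      using summable_abs_real[OF assms(2)]
      by (auto simp: abs_mult real_norm_def intro: summable_on_cmult_right)
  next
    have "(\<lambda>a. infsum (\<lambda>b. norm (g (fst (a,b)) * h (snd (a,b)))) UNIV) = (\<lambda>a. \<bar>g a\<bar> * infsum (\<lambda>b. \<bar>h b\<bar>) UNIV)"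
      by (auto simp: abs_mult real_norm_def infsum_cmult_right summable_abs_real[OF assms(2)])
    then show "(\<lambda>a. norm (infsum (\<lambda>b. norm (g (fst (a,b)) * h (snd (a,b)))) UNIV)) summable_on UNIV"
      using summable_abs_real[OF assms(1)]
      by (simp add: abs_mult real_norm_def summable_on_cmult_left infsum_nonneg)
  qed
  then show ?thesis by (auto intro: abs_summable_real simp: real_norm_def case_prod_unfold)
qed

lemma conv_pair_summable:
  fixes g h :: "'a::ab_group_add \<Rightarrow> real"
  assumes "g summable_on UNIV" "h summable_on UNIV"
  shows "(\<lambda>(x,\<xi>). g \<xi> * h (x - \<xi>)) summable_on UNIV"
proof -
  have b: "bij_betw (\<lambda>(x,\<xi>). (\<xi>, x - \<xi>)) UNIV (UNIV :: ('a\<times>'a) set)"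
    by (rule bij_betwI[where g="\<lambda>(a,b). (a+b, a)"]) auto
  have "(\<lambda>p. (\<lambda>(a,b). g a * h b) ((\<lambda>(x,\<xi>). (\<xi>, x - \<xi>)) p)) summable_on UNIV"
    using summable_on_reindex_bij_betw[OF b] product_summable[OF assms] by blast
  then show ?thesis by (simp add: case_prod_unfold)
qed

definition conv :: "('a::ab_group_add \<Rightarrow> real) \<Rightarrow> ('a \<Rightarrow> real) \<Rightarrow> 'a \<Rightarrow> real" where
  "conv g h x = infsum (\<lambda>\<xi>. g \<xi> * h (x - \<xi>)) UNIV"

definition one_fn :: "'a::zero \<Rightarrow> real" where "one_fn x = (if x = 0 then 1 else 0)"

lemma conv_term_summable:
  fixes g h :: "'a::ab_group_add \<Rightarrow> real"
  assumes "g summable_on UNIV" "h summable_on UNIV"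
  shows "(\<lambda>\<xi>. g \<xi> * h (x - \<xi>)) summable_on UNIV"
proof -
  have "(\<lambda>\<xi>. \<bar>g \<xi>\<bar> * infsum (\<lambda>x. \<bar>h x\<bar>) UNIV) summable_on UNIV"
    using summable_abs_real[OF assms(1)] by (rule summable_on_cmult_left)
  then have "(\<lambda>\<xi>. \<bar>g \<xi> * h (x - \<xi>)\<bar>) summable_on UNIV"
    by (rule summable_on_comparison_test)
      (auto simp: abs_mult intro!: mult_left_mono abs_le_infsum assms)
  then show ?thesis by (rule abs_summable_real)
qed

lemma conv_summable:
  fixes g h :: "'a::ab_group_add \<Rightarrow> real"
  assumes "g summable_on UNIV" "h summable_on UNIV"
  shows "conv g h summable_on UNIV"
proof -
  have "(\<lambda>(x,\<xi>). g \<xi> * h (x - \<xi>)) summable_on Sigma UNIV (\<lambda>_. UNIV)"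
    using conv_pair_summable[OF assms] by simp
  from summable_on_Sigma_banach[OF this] show ?thesis
    unfolding conv_def[abs_def] by simp
qed

lemma conv_norm:
  fixes g h :: "'a::ab_group_add \<Rightarrow> real"
  assumes "g summable_on UNIV" "h summable_on UNIV"
  shows "infsum (\<lambda>x. \<bar>conv g h x\<bar>) UNIV \<le> infsum (\<lambda>x. \<bar>g x\<bar>) UNIV * infsum (\<lambda>x. \<bar>h x\<bar>) UNIV"
proof -
  have ga: "(\<lambda>x. \<bar>g x\<bar>) summable_on UNIV" and ha: "(\<lambda>x. \<bar>h x\<bar>) summable_on UNIV"
    using assms by (auto intro: summable_abs_real)
  have P: "(\<lambda>(x,\<xi>). \<bar>g \<xi>\<bar> * \<bar>h (x - \<xi>)\<bar>) summable_on UNIV"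
    using conv_pair_summable[OF ga ha] .
  have "infsum (\<lambda>x. \<bar>conv g h x\<bar>) UNIV \<le> infsum (\<lambda>x. infsum (\<lambda>\<xi>. \<bar>g \<xi>\<bar> * \<bar>h (x - \<xi>)\<bar>) UNIV) UNIV"
  proof (rule infsum_mono)
    show "(\<lambda>x. \<bar>conv g h x\<bar>) summable_on UNIV"
      by (intro summable_abs_real conv_summable assms)
    show "(\<lambda>x. infsum (\<lambda>\<xi>. \<bar>g \<xi>\<bar> * \<bar>h (x - \<xi>)\<bar>) UNIV) summable_on UNIV"
      using summable_on_Sigma_banach[of "\<lambda>x \<xi>. \<bar>g \<xi>\<bar> * \<bar>h (x - \<xi>)\<bar>" UNIV "\<lambda>_. UNIV"] P by simp
    fix x
    show "\<bar>conv g h x\<bar> \<le> infsum (\<lambda>\<xi>. \<bar>g \<xi>\<bar> * \<bar>h (x - \<xi>)\<bar>) UNIV"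
      unfolding conv_def
      using norm_infsum_bound[of "\<lambda>\<xi>. g \<xi> * h (x - \<xi>)" UNIV]
        summable_abs_real[OF conv_term_summable[OF assms, of x]]
      by (simp add: real_norm_def abs_mult)
  qed
  also have "\<dots> = infsum (\<lambda>\<xi>. infsum (\<lambda>x. \<bar>g \<xi>\<bar> * \<bar>h (x - \<xi>)\<bar>) UNIV) UNIV"
    by (rule infsum_swap_banach) (use P in simp)
  also have "\<dots> = infsum (\<lambda>\<xi>. \<bar>g \<xi>\<bar> * infsum (\<lambda>x. \<bar>h x\<bar>) UNIV) UNIV"
  proof (rule infsum_cong)
    fix \<xi>
    note b = bij_diff_c[of \<xi>]
    have "infsum (\<lambda>x. \<bar>h (x - \<xi>)\<bar>) UNIV = infsum (\<lambda>x. \<bar>h x\<bar>) UNIV"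
      using infsum_reindex_bij_betw[OF b, of "\<lambda>y. \<bar>h y\<bar>"] .
    then show "infsum (\<lambda>x. \<bar>g \<xi>\<bar> * \<bar>h (x - \<xi>)\<bar>) UNIV = \<bar>g \<xi>\<bar> * infsum (\<lambda>x. \<bar>h x\<bar>) UNIV"
      by (simp add: infsum_cmult_right')
  qed
  also have "\<dots> = infsum (\<lambda>x. \<bar>g x\<bar>) UNIV * infsum (\<lambda>x. \<bar>h x\<bar>) UNIV"
    by (simp add: infsum_cmult_left')
  finally show ?thesis .
qed

lemma conv_comm:
  fixes g h :: "'a::ab_group_add \<Rightarrow> real"
  shows "conv g h = conv h g"
proof
  fix x
  note b = bij_c_diff[of x]
  show "conv g h x = conv h g x"
    unfolding conv_def
    using infsum_reindex_bij_betw[OF b, of "\<lambda>\<xi>. g \<xi> * h (x - \<xi>)"]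
    by (simp add: mult.commute)
qed

lemma conv_add_left:
  fixes g h k :: "'a::ab_group_add \<Rightarrow> real"
  assumes "g summable_on UNIV" "h summable_on UNIV" "k summable_on UNIV"
  shows "conv (\<lambda>x. g x + h x) k x = conv g k x + conv h k x"
  unfolding conv_def
  using infsum_add[OF conv_term_summable[OF assms(1,3)] conv_term_summable[OF assms(2,3)], of x x]
  by (simp add: distrib_right)

lemma conv_scale_left:
  fixes g k :: "'a::ab_group_add \<Rightarrow> real"
  shows "conv (\<lambda>x. c * g x) k x = c * conv g k x"
  unfolding conv_def by (simp add: infsum_cmult_right' mult.assoc)

lemma conv_one_left:
  fixes g :: "'a::ab_group_add \<Rightarrow> real"
  shows "conv one_fn g x = g x"
proof -
  have "conv one_fn g x = infsum (\<lambda>\<xi>. one_fn \<xi> * g (x - \<xi>)) {0}"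
    unfolding conv_def by (rule infsum_cong_neutral) (auto simp: one_fn_def)
  then show ?thesis by (simp add: one_fn_def)
qed

lemma one_fn_summable: "(one_fn :: 'a::zero \<Rightarrow> real) summable_on UNIV"
proof -
  have "(one_fn :: 'a \<Rightarrow> real) summable_on UNIV \<longleftrightarrow> (one_fn :: 'a \<Rightarrow> real) summable_on {0}"
    by (rule summable_on_cong_neutral) (auto simp: one_fn_def)
  then show ?thesis by simp
qed

lemma conv_assoc:
  fixes g h k :: "'a::ab_group_add \<Rightarrow> real"
  assumes g: "g summable_on UNIV" and h: "h summable_on UNIV" and k: "k summable_on UNIV"
  shows "conv (conv g h) k x = conv g (conv h k) x"
proof -
  define B where "B = infsum (\<lambda>x. \<bar>k x\<bar>) UNIV"
  have P: "(\<lambda>(\<eta>,\<xi>). g \<xi> * h (\<eta> - \<xi>) * k (x - \<eta>)) summable_on UNIV"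
  proof -
    have "(\<lambda>(\<eta>,\<xi>). \<bar>g \<xi> * h (\<eta> - \<xi>)\<bar> * B) summable_on UNIV"
      using summable_on_cmult_left[OF summable_abs_real[OF conv_pair_summable[OF g h]], of B]
      by (simp add: case_prod_unfold)
    then have "(\<lambda>(\<eta>,\<xi>). \<bar>g \<xi> * h (\<eta> - \<xi>) * k (x - \<eta>)\<bar>) summable_on UNIV"
      by (rule summable_on_comparison_test)
        (auto simp: abs_mult B_def intro!: mult_left_mono abs_le_infsum k)
    then show ?thesis using abs_summable_real by (simp add: case_prod_unfold)
  qed
  have "conv (conv g h) k x = infsum (\<lambda>\<eta>. infsum (\<lambda>\<xi>. g \<xi> * h (\<eta> - \<xi>) * k (x - \<eta>)) UNIV) UNIV"
    unfolding conv_def by (simp add: infsum_cmult_left')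
  also have "\<dots> = infsum (\<lambda>\<xi>. infsum (\<lambda>\<eta>. g \<xi> * h (\<eta> - \<xi>) * k (x - \<eta>)) UNIV) UNIV"
    by (rule infsum_swap_banach) (use P in simp)
  also have "\<dots> = infsum (\<lambda>\<xi>. g \<xi> * infsum (\<lambda>\<zeta>. h \<zeta> * k (x - \<xi> - \<zeta>)) UNIV) UNIV"
  proof (rule infsum_cong)
    fix \<xi>
    note b = bij_add_c[of \<xi>]
    have "infsum (\<lambda>\<eta>. g \<xi> * h (\<eta> - \<xi>) * k (x - \<eta>)) UNIV
        = infsum (\<lambda>\<zeta>. g \<xi> * h (\<zeta> + \<xi> - \<xi>) * k (x - (\<zeta> + \<xi>))) UNIV"
      using infsum_reindex_bij_betw[OF b, of "\<lambda>\<eta>. g \<xi> * h (\<eta> - \<xi>) * k (x - \<eta>)"] by simp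
    also have "\<dots> = g \<xi> * infsum (\<lambda>\<zeta>. h \<zeta> * k (x - \<xi> - \<zeta>)) UNIV"
      by (simp add: infsum_cmult_right' mult.assoc algebra_simps)
    finally show "infsum (\<lambda>\<eta>. g \<xi> * h (\<eta> - \<xi>) * k (x - \<eta>)) UNIV = g \<xi> * infsum (\<lambda>\<zeta>. h \<zeta> * k (x - \<xi> - \<zeta>)) UNIV" .
  qed
  also have "\<dots> = conv g (conv h k) x" unfolding conv_def ..
  finally show ?thesis .
qed

typedef ('a::ab_group_add) l1 = "{g :: 'a \<Rightarrow> real. g summable_on UNIV}"
  morphisms l1_fn Abs_l1
  by (rule exI[of _ "\<lambda>_. 0"]) simp

setup_lifting type_definition_l1

lemma l1_fn_summable: "l1_fn g summable_on UNIV"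
  using l1_fn by blast

lemma l1_fn_abs_summable: "(\<lambda>x. \<bar>l1_fn g x\<bar>) summable_on UNIV"
  by (rule summable_abs_real[OF l1_fn_summable])

instantiation l1 :: (ab_group_add) real_normed_vector
begin

lift_definition zero_l1 :: "'a l1" is "\<lambda>_. 0" by simp
lift_definition plus_l1 :: "'a l1 \<Rightarrow> 'a l1 \<Rightarrow> 'a l1" is "\<lambda>g h x. g x + h x"
  by (rule summable_on_add) auto
lift_definition uminus_l1 :: "'a l1 \<Rightarrow> 'a l1" is "\<lambda>g x. - g x"
  by (simp add: summable_on_uminus)
lift_definition minus_l1 :: "'a l1 \<Rightarrow> 'a l1 \<Rightarrow> 'a l1" is "\<lambda>g h x. g x - h x"
  by (rule summable_on_diff_real) auto
lift_definition scaleR_l1 :: "real \<Rightarrow> 'a l1 \<Rightarrow> 'a l1" is "\<lambda>c g x. c * g x"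
  by (rule summable_on_cmult_right) auto
lift_definition norm_l1 :: "'a l1 \<Rightarrow> real" is "\<lambda>g. infsum (\<lambda>x. \<bar>g x\<bar>) UNIV" .

definition sgn_l1 :: "'a l1 \<Rightarrow> 'a l1" where "sgn_l1 x = inverse (norm x) *\<^sub>R x"
definition dist_l1 :: "'a l1 \<Rightarrow> 'a l1 \<Rightarrow> real" where "dist_l1 x y = norm (x - y)"
definition uniformity_l1 :: "('a l1 \<times> 'a l1) filter"
  where "uniformity_l1 = (INF e\<in>{0 <..}. principal {(x, y). dist x y < e})"
definition open_l1 :: "'a l1 set \<Rightarrow> bool"
  where "open_l1 S = (\<forall>x\<in>S. \<forall>\<^sub>F (x', y) in uniformity. x' = x \<longrightarrow> y \<in> S)"

instance
proof
  fix x y z :: "'a l1" and a b :: real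
  show "x + y + z = x + (y + z)" by transfer (simp add: add.assoc)
  show "x + y = y + x" by transfer (simp add: add.commute)
  show "0 + x = x" by transfer simp
  show "- x + x = 0" by transfer simp
  show "x - y = x + - y" by transfer simp
  show "a *\<^sub>R (x + y) = a *\<^sub>R x + a *\<^sub>R y" by transfer (simp add: algebra_simps)
  show "(a + b) *\<^sub>R x = a *\<^sub>R x + b *\<^sub>R x" by transfer (simp add: algebra_simps)
  show "a *\<^sub>R b *\<^sub>R x = (a * b) *\<^sub>R x" by transfer (simp add: algebra_simps)
  show "1 *\<^sub>R x = x" by transfer simp
  show "dist x y = norm (x - y)" by (simp add: dist_l1_def)
  show "sgn x = inverse (norm x) *\<^sub>R x" by (simp add: sgn_l1_def)
  show "uniformity = (INF e\<in>{0<..}. principal {(x, y::'a l1). dist x y < e})"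
    by (simp add: uniformity_l1_def)
  show "\<And>U. open U = (\<forall>x\<in>U. \<forall>\<^sub>F (x', y) in uniformity. (x'::'a l1) = x \<longrightarrow> y \<in> U)"
    by (simp add: open_l1_def)
  show "norm x = 0 \<longleftrightarrow> x = 0"
  proof transfer
    fix g :: "'a \<Rightarrow> real" assume g: "g summable_on UNIV"
    show "infsum (\<lambda>x. \<bar>g x\<bar>) UNIV = 0 \<longleftrightarrow> g = (\<lambda>_. 0)"
    proof
      assume "infsum (\<lambda>x. \<bar>g x\<bar>) UNIV = 0"
      then have "\<bar>g x\<bar> = 0" for x
        using nonneg_infsum_le_0D[of "\<lambda>x. \<bar>g x\<bar>" UNIV x] summable_abs_real[OF g] by simp
      then show "g = (\<lambda>_. 0)" by auto
    qed simp
  qed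
  show "norm (x + y) \<le> norm x + norm y"
  proof transfer
    fix g h :: "'a \<Rightarrow> real" assume g: "g summable_on UNIV" and h: "h summable_on UNIV"
    have "infsum (\<lambda>x. \<bar>g x + h x\<bar>) UNIV \<le> infsum (\<lambda>x. \<bar>g x\<bar> + \<bar>h x\<bar>) UNIV"
      by (rule infsum_mono) (auto intro!: summable_abs_real summable_on_add g h simp: abs_triangle_ineq)
    also have "\<dots> = infsum (\<lambda>x. \<bar>g x\<bar>) UNIV + infsum (\<lambda>x. \<bar>h x\<bar>) UNIV"
      by (rule infsum_add) (auto intro!: summable_abs_real g h)
    finally show "infsum (\<lambda>x. \<bar>g x + h x\<bar>) UNIV \<le> infsum (\<lambda>x. \<bar>g x\<bar>) UNIV + infsum (\<lambda>x. \<bar>h x\<bar>) UNIV" .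
  qed
  show "norm (a *\<^sub>R x) = \<bar>a\<bar> * norm x"
    by transfer (simp add: abs_mult infsum_cmult_right')
qed

end

lemma l1_fn_le_norm: "\<bar>l1_fn g x\<bar> \<le> norm g"
  by transfer (rule abs_le_infsum)

lemma l1_fn_diff: "l1_fn (g - h) x = l1_fn g x - l1_fn h x"
  by transfer simp
lemma l1_fn_add: "l1_fn (g + h) x = l1_fn g x + l1_fn h x"
  by transfer simp
lemma l1_fn_scaleR: "l1_fn (c *\<^sub>R g) x = c * l1_fn g x"
  by transfer simp
lemma l1_fn_zero: "l1_fn 0 x = 0"
  by transfer simp

lemma bounded_linear_l1_fn: "bounded_linear (\<lambda>g. l1_fn g x)"
  by (rule bounded_linear_intro[of _ 1]) (auto simp: l1_fn_add l1_fn_scaleR l1_fn_le_norm)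

lemma norm_l1_le_finite:
  fixes g :: "'a::ab_group_add l1"
  assumes "\<And>F. finite F \<Longrightarrow> sum (\<lambda>x. \<bar>l1_fn g x\<bar>) F \<le> e"
  shows "norm g \<le> e"
  using assms by transfer (auto intro: infsum_le_finite_sums summable_abs_real)

instance l1 :: (ab_group_add) banach
proof
  fix X :: "nat \<Rightarrow> 'a l1"
  assume C: "Cauchy X"
  have Cx: "Cauchy (\<lambda>n. l1_fn (X n) x)" for x
  proof (rule metric_CauchyI)
    fix e :: real assume "e > 0"
    then obtain M where M: "\<forall>m\<ge>M. \<forall>n\<ge>M. dist (X m) (X n) < e"
      using C by (meson metric_CauchyD)
    show "\<exists>M. \<forall>m\<ge>M. \<forall>n\<ge>M. dist (l1_fn (X m) x) (l1_fn (X n) x) < e"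
    proof (intro exI allI impI)
      fix m n assume "m \<ge> M" "n \<ge> M"
      then have "dist (X m) (X n) < e" using M by blast
      then show "dist (l1_fn (X m) x) (l1_fn (X n) x) < e"
        using l1_fn_le_norm[of "X m - X n" x]
        by (simp add: dist_norm l1_fn_diff real_norm_def)
    qed
  qed
  define G where "G x = lim (\<lambda>n. l1_fn (X n) x)" for x
  have G: "(\<lambda>n. l1_fn (X n) x) \<longlonglongrightarrow> G x" for x
    using Cx[of x] by (simp add: G_def Cauchy_convergent_iff convergent_LIMSEQ_iff)
  have key: "\<exists>N. \<forall>n\<ge>N. (\<lambda>x. l1_fn (X n) x - G x) summable_on UNIV \<and>
                   infsum (\<lambda>x. \<bar>l1_fn (X n) x - G x\<bar>) UNIV \<le> e" if "e > 0" for e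
  proof -
    obtain N where N: "\<forall>m\<ge>N. \<forall>n\<ge>N. dist (X m) (X n) < e"
      using C \<open>e > 0\<close> by (meson metric_CauchyD)
    show ?thesis
    proof (intro exI allI impI)
      fix n assume n: "n \<ge> N"
      have fs: "sum (\<lambda>x. \<bar>l1_fn (X n) x - G x\<bar>) F \<le> e" if "finite F" for F
      proof -
        have lim: "(\<lambda>m. sum (\<lambda>x. \<bar>l1_fn (X n) x - l1_fn (X m) x\<bar>) F)
                 \<longlonglongrightarrow> sum (\<lambda>x. \<bar>l1_fn (X n) x - G x\<bar>) F"
          by (intro tendsto_sum tendsto_rabs tendsto_diff tendsto_const G)
        have "sum (\<lambda>x. \<bar>l1_fn (X n) x - l1_fn (X m) x\<bar>) F \<le> e" if "m \<ge> N" for m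
        proof -
          have "sum (\<lambda>x. \<bar>l1_fn (X n - X m) x\<bar>) F \<le> infsum (\<lambda>x. \<bar>l1_fn (X n - X m) x\<bar>) UNIV"
            by (rule finite_sum_le_infsum) (auto intro: l1_fn_abs_summable \<open>finite F\<close>)
          also have "\<dots> = norm (X n - X m)" by transfer simp
          also have "\<dots> < e" using N n that by (simp add: dist_norm)
          finally show ?thesis by (simp add: l1_fn_diff)
        qed
        then show ?thesis
          by (intro LIMSEQ_le_const2[OF lim]) auto
      qed
      have sm: "(\<lambda>x. \<bar>l1_fn (X n) x - G x\<bar>) summable_on UNIV"
        by (rule nonneg_bdd_above_summable_on) (auto intro!: bdd_aboveI2 fs)
      then have s1: "(\<lambda>x. l1_fn (X n) x - G x) summable_on UNIV" by (rule abs_summable_real)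
      have s2: "infsum (\<lambda>x. \<bar>l1_fn (X n) x - G x\<bar>) UNIV \<le> e"
        by (rule infsum_le_finite_sums[OF sm fs]) auto
      show "(\<lambda>x. l1_fn (X n) x - G x) summable_on UNIV \<and> infsum (\<lambda>x. \<bar>l1_fn (X n) x - G x\<bar>) UNIV \<le> e"
        using s1 s2 by blast
    qed
  qed
  obtain N where N: "(\<lambda>x. l1_fn (X N) x - G x) summable_on UNIV"
    using key[of 1] by auto
  have GS: "G summable_on UNIV"
    using summable_on_diff_real[OF l1_fn_summable[of "X N"] N] by simp
  show "convergent X"
  proof (rule convergentI)
    show "X \<longlonglongrightarrow> Abs_l1 G"
    proof (rule metric_LIMSEQ_I)
      fix e :: real assume "e > 0"
      then obtain M where M: "\<forall>n\<ge>M. infsum (\<lambda>x. \<bar>l1_fn (X n) x - G x\<bar>) UNIV \<le> e/2"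
        using key[of "e/2"] by auto
      show "\<exists>M. \<forall>n\<ge>M. dist (X n) (Abs_l1 G) < e"
      proof (intro exI allI impI)
        fix n assume "n \<ge> M"
        have "dist (X n) (Abs_l1 G) = infsum (\<lambda>x. \<bar>l1_fn (X n) x - G x\<bar>) UNIV"
          unfolding dist_norm using GS
          by (simp add: norm_l1.rep_eq l1_fn_diff Abs_l1_inverse)
        also have "\<dots> \<le> e/2" using M \<open>n \<ge> M\<close> by blast
        finally show "dist (X n) (Abs_l1 G) < e" using \<open>e > 0\<close> by simp
      qed
    qed
  qed
qed

instantiation l1 :: (ab_group_add) comm_ring_1
begin
lift_definition times_l1 :: "'a l1 \<Rightarrow> 'a l1 \<Rightarrow> 'a l1" is conv by (rule conv_summable)
lift_definition one_l1 :: "'a l1" is one_fn by (rule one_fn_summable)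
instance
proof
  fix a b c :: "'a l1"
  show "a * b * c = a * (b * c)" by transfer (auto intro!: ext conv_assoc)
  show "a * b = b * a" by transfer (rule conv_comm)
  show "1 * a = a" by transfer (auto intro!: ext conv_one_left)
  show "(a + b) * c = a * c + b * c" by transfer (auto intro!: ext conv_add_left)
  show "(0::'a l1) \<noteq> 1" by transfer (auto simp: one_fn_def fun_eq_iff)
qed
end

lemma one_fn_abs_sum: "infsum (\<lambda>x. \<bar>one_fn (x::'a::zero)\<bar>) UNIV = 1"
proof -
  have "infsum (\<lambda>x. \<bar>one_fn (x::'a)\<bar>) UNIV = infsum (\<lambda>x. \<bar>one_fn (x::'a)\<bar>) {0}"
    by (rule infsum_cong_neutral) (auto simp: one_fn_def)
  then show ?thesis by (simp add: one_fn_def)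
qed

instance l1 :: (ab_group_add) real_normed_algebra_1
proof
  fix x y :: "'a l1" and a :: real
  have sl: "a *\<^sub>R x * y = a *\<^sub>R (x * y)" for x y :: "'a l1"
    by transfer (auto intro!: ext conv_scale_left)
  show "a *\<^sub>R x * y = a *\<^sub>R (x * y)" by (rule sl)
  show "x * a *\<^sub>R y = a *\<^sub>R (x * y)"
    by (metis (no_types) mult.commute sl)
  show "norm (x * y) \<le> norm x * norm y" by transfer (rule conv_norm)
  show "norm (1::'a l1) = 1" by transfer (rule one_fn_abs_sum)
qed

lemma l1_fn_times: "l1_fn (g * h) x = infsum (\<lambda>\<xi>. l1_fn g \<xi> * l1_fn h (x - \<xi>)) UNIV"
  by transfer (simp add: conv_def)

lemma l1_fn_one: "l1_fn 1 x = (if x = 0 then 1 else 0)"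
  by transfer (simp add: one_fn_def)

lemma neumann_inverse:
  fixes y :: "'a::{real_normed_algebra_1,banach,comm_ring_1}"
  assumes "norm (1 - y) < 1"
  shows "\<exists>z. y * z = 1"
proof -
  define q where "q = 1 - y"
  have sq: "summable (\<lambda>n. norm (q ^ n))"
    by (rule summable_comparison_test[OF _ summable_geometric[of "norm q"]])
       (use assms in \<open>auto simp: q_def norm_power_ineq\<close>)
  then have s: "summable (\<lambda>n. q ^ n)" by (rule summable_norm_cancel)
  have "(\<lambda>n. y * (\<Sum>k<n. q ^ k)) \<longlonglongrightarrow> y * suminf (\<lambda>n. q ^ n)"
    by (intro tendsto_mult tendsto_const summable_LIMSEQ s)
  moreover have "y * (\<Sum>k<n. q ^ k) = 1 - q ^ n" for n
  proof (induction n)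
    case (Suc n)
    then show ?case by (simp add: q_def algebra_simps)
  qed simp
  moreover have "(\<lambda>n. 1 - q ^ n) \<longlonglongrightarrow> 1"
  proof -
    have "(\<lambda>n. q ^ n) \<longlonglongrightarrow> 0" using summable_LIMSEQ_zero[OF s] .
    then show ?thesis using tendsto_diff[OF tendsto_const[of 1]] by fastforce
  qed
  ultimately have "y * suminf (\<lambda>n. q ^ n) = 1" using LIMSEQ_unique by fastforce
  then show ?thesis by blast
qed

lemma semigroup_bounded:
  fixes U :: "real \<Rightarrow> 'a::real_normed_algebra_1"
  assumes semi: "\<And>s t. s \<ge> 0 \<Longrightarrow> t \<ge> 0 \<Longrightarrow> U (s + t) = U s * U t"
    and U0: "U 0 = 1"
    and d: "d > 0" and B: "\<And>r. 0 \<le> r \<Longrightarrow> r \<le> d \<Longrightarrow> norm (U r) \<le> 2"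
  shows "\<forall>r. 0 \<le> r \<longrightarrow> r \<le> real N * d \<longrightarrow> norm (U r) \<le> 2 ^ N"
proof (induction N)
  case 0
  then show ?case using U0 by auto
next
  case (Suc N)
  show ?case
  proof (intro allI impI)
    fix r :: real assume r: "0 \<le> r" "r \<le> real (Suc N) * d"
    show "norm (U r) \<le> 2 ^ Suc N"
    proof (cases "r \<le> d")
      case True
      have "(2::real) \<le> 2 ^ Suc N" using one_le_power[of "2::real" N] by simp
      then show ?thesis using B[OF r(1) True] by linarith
    next
      case False
      have "U r = U (r - d) * U d" using semi[of "r - d" d] False d by simp
      then have "norm (U r) \<le> norm (U (r - d)) * norm (U d)" by (simp add: norm_mult_ineq)
      also have "\<dots> \<le> 2 ^ N * 2"
        using Suc.IH[rule_format, of "r - d"] False r B[of d] d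
        by (intro mult_mono) (auto simp: algebra_simps)
      finally show ?thesis by simp
    qed
  qed
qed

lemma semigroup_deriv:
  fixes U :: "real \<Rightarrow> 'a::{real_normed_algebra_1,banach,comm_ring_1}"
  assumes semi: "\<And>s t. s \<ge> 0 \<Longrightarrow> t \<ge> 0 \<Longrightarrow> U (s + t) = U s * U t"
    and U0: "U 0 = 1"
    and cont0: "((\<lambda>s. norm (U s - 1)) \<longlongrightarrow> 0) (at_right 0)"
  shows "\<exists>A. \<forall>s\<ge>0. (U has_vector_derivative U s * A) (at s within {0..})"
proof -
  have small: "\<exists>d>0. \<forall>r. 0 \<le> r \<longrightarrow> r \<le> d \<longrightarrow> norm (U r - 1) < e" if e: "e > 0" for e
  proof -
    have "\<forall>\<^sub>F s in at_right 0. norm (U s - 1) < e"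
      using order_tendstoD(2)[OF cont0 e] .
    then obtain b where b: "b > 0" "\<And>y. 0 < y \<Longrightarrow> y < b \<Longrightarrow> norm (U y - 1) < e"
      by (auto simp: eventually_at_right_field)
    show ?thesis
    proof (intro exI[of _ "b/2"] conjI allI impI)
      fix r :: real assume r: "0 \<le> r" "r \<le> b/2"
      show "norm (U r - 1) < e"
      proof (cases "r = 0")
        case True then show ?thesis using U0 e by simp
      next
        case False then show ?thesis using b r by auto
      qed
    qed (use b in auto)
  qed
  obtain d where d: "d > 0" "\<And>r. 0 \<le> r \<Longrightarrow> r \<le> d \<Longrightarrow> norm (U r - 1) < 1/2"
    using small[of "1/2"] by auto
  have B2: "norm (U r) \<le> 2" if "0 \<le> r" "r \<le> d" for r
  proof -
    have "norm (U r) \<le> norm (U r - 1) + norm (1::'a)" using norm_triangle_ineq[of "U r - 1" 1] by simp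
    then show ?thesis using d(2)[OF that] by simp
  qed
  have bnd: "\<exists>M>0. \<forall>r. 0 \<le> r \<longrightarrow> r \<le> S \<longrightarrow> norm (U r) \<le> M" for S
  proof -
    obtain N :: nat where N: "S / d \<le> real N" using real_arch_simple by blast
    then have "S \<le> real N * d" using d(1) by (simp add: field_simps)
    then show ?thesis
      using semigroup_bounded[OF semi U0 d(1) B2, of N]
      by (intro exI[of _ "2 ^ N"]) auto
  qed
  have cont: "continuous_on {0..} U"
    unfolding continuous_on_iff
  proof (intro ballI allI impI)
    fix s e :: real assume s: "s \<in> {0..}" and e: "e > 0"
    obtain M where M: "M > 0" "\<And>r. 0 \<le> r \<Longrightarrow> r \<le> s + 1 \<Longrightarrow> norm (U r) \<le> M"
      using bnd[of "s + 1"] by auto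
    obtain d0 where d0: "d0 > 0" "\<And>r. 0 \<le> r \<Longrightarrow> r \<le> d0 \<Longrightarrow> norm (U r - 1) < e / M"
      using small[of "e / M"] e M(1) by auto
    show "\<exists>d>0. \<forall>t\<in>{0..}. dist t s < d \<longrightarrow> dist (U t) (U s) < e"
    proof (intro exI[of _ "min d0 1"] conjI ballI impI)
      fix t :: real assume t: "t \<in> {0..}" "dist t s < min d0 1"
      have ts: "\<bar>t - s\<bar> < d0" "\<bar>t - s\<bar> < 1" using t(2) by (auto simp: dist_real_def)
      show "dist (U t) (U s) < e"
      proof (cases "s \<le> t")
        case True
        have "U t - U s = U s * (U (t - s) - 1)"
          using semi[of s "t - s"] s True by (simp add: algebra_simps)
        then have "norm (U t - U s) \<le> norm (U s) * norm (U (t - s) - 1)"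
          by (simp add: norm_mult_ineq)
        also have "\<dots> \<le> M * norm (U (t - s) - 1)"
          using M(2)[of s] s by (intro mult_right_mono) simp_all
        also have "\<dots> < M * (e / M)"
        proof (rule mult_strict_left_mono[OF d0(2) M(1)])
          show "0 \<le> t - s" using True by simp
          show "t - s \<le> d0" using ts(1) by simp
        qed
        finally show ?thesis using M(1) by (simp add: dist_norm)
      next
        case False
        have "U s - U t = U t * (U (s - t) - 1)"
          using semi[of t "s - t"] t False by (simp add: algebra_simps)
        then have "norm (U s - U t) \<le> norm (U t) * norm (U (s - t) - 1)"
          by (simp add: norm_mult_ineq)
        also have "\<dots> \<le> M * norm (U (s - t) - 1)"
          using M(2)[of t] False t(1) by (intro mult_right_mono) simp_all
        also have "\<dots> < M * (e / M)"
        proof (rule mult_strict_left_mono[OF d0(2) M(1)])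
          show "0 \<le> s - t" using False by simp
          show "s - t \<le> d0" using ts(1) by simp
        qed
        finally show ?thesis using M(1) by (simp add: dist_norm norm_minus_commute)
      qed
    qed (use d0 in auto)
  qed
  have cont': "continuous_on {a..b} U" if "0 \<le> a" for a b
    using continuous_on_subset[OF cont] that by auto
  have intg: "U integrable_on {a..b}" if "0 \<le> a" for a b
    by (rule integrable_continuous_interval[OF cont'[OF that]])
  define G where "G u = integral {0..u} U" for u
  have Gd: "(G has_vector_derivative U u) (at u within {0..})" if u: "u \<ge> 0" for u
  proof -
    have "(G has_vector_derivative U u) (at u within {0..u+1})"
      unfolding G_def by (rule integral_has_vector_derivative[OF cont']) (use u in auto)
    moreover have "at u within {0..u+1} = at u within {0..}"
      by (rule at_within_nhd[of _ "{..<u+1}"]) auto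
    ultimately show ?thesis by simp
  qed
  have Gd2: "(G has_vector_derivative U u) (at u)" if u: "u > 0" for u
  proof -
    have "(G has_vector_derivative U u) (at u within {0..u+1})"
      unfolding G_def by (rule integral_has_vector_derivative[OF cont']) (use u in auto)
    moreover have "at u within {0..u+1} = at u"
      by (rule at_within_interior) (use u in auto)
    ultimately show ?thesis by simp
  qed
  define V where "V = G d"
  have "norm (V - d *\<^sub>R 1) = norm (integral {0..d} (\<lambda>r. U r - 1))"
    unfolding V_def G_def using d(1)
    by (subst integral_diff) (auto intro: intg)
  also have "\<dots> \<le> (1/2) * (d - 0)"
    by (rule integral_bound) (use d in \<open>auto intro!: continuous_intros cont' less_imp_le\<close>)
  finally have Vn: "norm (V - d *\<^sub>R 1) \<le> d / 2" by simp
  define y where "y = (1/d) *\<^sub>R V"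
  have "1 - y = (1/d) *\<^sub>R (d *\<^sub>R 1 - V)"
    using d(1) by (simp add: y_def scaleR_diff_right)
  then have "norm (1 - y) = (1/d) * norm (V - d *\<^sub>R 1)"
    using d(1) by (simp add: norm_minus_commute)
  also have "\<dots> \<le> (1/d) * (d/2)" using Vn d(1) by (intro mult_left_mono) auto
  also have "\<dots> < 1" using d(1) by simp
  finally obtain Z where Z: "y * Z = 1" using neumann_inverse by blast
  have shift: "U s * V = G (s + d) - G s" if s: "s \<ge> 0" for s
  proof -
    have "U s * V = integral {0..d} (\<lambda>r. U s * U r)"
      unfolding V_def G_def
      by (rule integral_unique[symmetric], rule has_integral_mult_right)
         (use intg in auto)
    also have "\<dots> = integral {0..d} (\<lambda>r. U (r + s))"
      by (rule integral_cong) (use semi s in \<open>auto simp: add.commute\<close>)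
    also have "\<dots> = integral {s..s+d} U"
      using integral_shift_real_ivl[where a=s and b="s+d" and c=s and f=U] by (simp add: add.commute)
    also have "\<dots> = G (s + d) - G s"
      unfolding G_def using Henstock_Kurzweil_Integration.integral_combine[where a=0 and c=s and b="s+d" and f=U] s d(1) intg[of 0 "s + d"]
      by (simp add: algebra_simps)
    finally show ?thesis .
  qed
  define A where "A = (1/d) *\<^sub>R ((U d - 1) * Z)"
  have "(U has_vector_derivative U s * A) (at s within {0..})" if s: "s \<ge> 0" for s
  proof -
    have eq: "U t = (1/d) *\<^sub>R ((G (t + d) - G t) * Z)" if t: "t \<in> {0..}" for t
    proof -
      have "U t = U t * (y * Z)" by (simp add: Z)
      also have "\<dots> = (1/d) *\<^sub>R ((U t * V) * Z)" by (simp add: y_def mult.assoc)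
      finally show ?thesis using shift[of t] t by simp
    qed
    have D1: "((\<lambda>t. G (t + d)) has_vector_derivative U (s + d)) (at s within {0..})"
    proof -
      have "((\<lambda>t. t + d) has_vector_derivative 1) (at s within {0..})"
        by (auto intro!: derivative_eq_intros)
      then have "((G \<circ> (\<lambda>t. t + d)) has_vector_derivative 1 *\<^sub>R U (s + d)) (at s within {0..})"
        by (rule vector_diff_chain_within) (use Gd2[of "s + d"] s d(1) in \<open>auto intro: has_vector_derivative_at_within\<close>)
      then show ?thesis by (simp add: o_def)
    qed
    have "((\<lambda>t. (1/d) *\<^sub>R ((G (t + d) - G t) * Z)) has_vector_derivative
              (1/d) *\<^sub>R ((U (s + d) - U s) * Z)) (at s within {0..})"
    proof -
      have "((\<lambda>t. (G (t + d) - G t) * Z) has_vector_derivative (U (s + d) - U s) * Z) (at s within {0..})"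
        by (intro has_vector_derivative_mult_left has_vector_derivative_diff D1 Gd s)
      then show ?thesis by (rule bounded_linear.has_vector_derivative[OF bounded_linear_scaleR_right])
    qed
    moreover have "(1/d) *\<^sub>R ((U (s + d) - U s) * Z) = U s * A"
      unfolding A_def using semi[of s d] s d(1) by (simp add: algebra_simps)
    ultimately show ?thesis
      by (intro has_vector_derivative_transform[OF _ eq]) (use s in auto)
  qed
  then show ?thesis by blast
qed

lemma linf_uminus: "linf (- x) = linf (x :: int ^ 'n::finite)"
  by (simp add: linf_def)

lemma linf_zero: "linf (0 :: int ^ 'n::finite) = 0"
  by (simp add: linf_def)

lemma linf_le1: "linf (x :: int ^ 'n::finite) \<le> 1 \<longleftrightarrow> (\<forall>i. \<bar>x $ i\<bar> \<le> 1)"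
  unfolding linf_def by (subst Max_le_iff) auto

lemma finite_linf_le1: "finite {x :: int ^ 'n::finite. linf x \<le> 1}"
proof -
  have fin: "finite (PiE (UNIV :: 'n set) (\<lambda>_. {-1..1::int}))"
    by (rule finite_PiE) auto
  have "finite (vec_nth -` PiE (UNIV :: 'n set) (\<lambda>_. {-1..1::int}))"
    by (rule finite_vimageI[OF fin]) (auto simp: inj_def vec_eq_iff)
  moreover have "{x :: int ^ 'n. linf x \<le> 1} \<subseteq> vec_nth -` PiE (UNIV :: 'n set) (\<lambda>_. {-1..1::int})"
    by (auto simp: linf_le1 PiE_UNIV_domain abs_le_iff)
  ultimately show ?thesis by (rule finite_subset[rotated])
qed

lemma ddelta_one_fn: "ddelta = one_fn"
  by (auto simp: ddelta_def one_fn_def fun_eq_iff)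

lemma rep_at_0:
  fixes T :: "int ^ 'n::finite \<Rightarrow> real \<Rightarrow> real"
  assumes "\<And>x. T x 0 = ddelta x"
  shows "pre_scale_space_rep T f x 0 = f x"
  using conv_one_left[of f x] assms
  by (simp add: pre_scale_space_rep_def conv_def ddelta_one_fn)

lemma rep_delta:
  fixes T :: "int ^ 'n::finite \<Rightarrow> real \<Rightarrow> real"
  shows "pre_scale_space_rep T ddelta y t = T y t"
proof -
  have "pre_scale_space_rep T ddelta y t = infsum (\<lambda>\<xi>. T \<xi> t * ddelta (y - \<xi>)) {y}"
    unfolding pre_scale_space_rep_def by (rule infsum_cong_neutral) (auto simp: ddelta_def)
  then show ?thesis by (simp add: ddelta_def)
qed

lemma props_use:
  assumes "has_pre_scale_space_props L" "s0 \<ge> 0"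
    and "((\<lambda>s. L x0 s) has_real_derivative d) (at s0 within {0..})"
  shows "(\<forall>x. linf (x - x0) = 1 \<longrightarrow> L x s0 \<le> L x0 s0) \<Longrightarrow> d \<le> 0"
    and "(\<forall>x. linf (x - x0) = 1 \<longrightarrow> L x s0 \<ge> L x0 s0) \<Longrightarrow> d \<ge> 0"
  using assms unfolding has_pre_scale_space_props_def by blast+

lemma kernel_deriv:
  fixes T :: "int ^ 'n::finite \<Rightarrow> real \<Rightarrow> real"
  assumes K: "pre_scale_space_kernels T"
  shows "\<exists>A :: (int ^ 'n) l1.
     (\<forall>f :: int ^ 'n \<Rightarrow> real. f summable_on UNIV \<longrightarrow> (\<forall>x s. s \<ge> 0 \<longrightarrow>
        ((\<lambda>t. pre_scale_space_rep T f x t) has_real_derivative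
          (\<Sum>\<^sub>\<infinity>\<xi>. l1_fn A (- \<xi>) * pre_scale_space_rep T f (x + \<xi>) s)) (at s within {0..}))) \<and>
     (\<forall>y. ((\<lambda>t. T y t) has_real_derivative l1_fn A y) (at 0 within {0..}))"
proof -
  have summ: "\<And>s. s \<ge> 0 \<Longrightarrow> (\<lambda>x. T x s) summable_on UNIV"
    and T0: "\<And>x. T x 0 = ddelta x"
    and sg: "\<And>s1 s2 x. s1 \<ge> 0 \<Longrightarrow> s2 \<ge> 0 \<Longrightarrow> dconv (\<lambda>\<xi>. T \<xi> s1) (\<lambda>\<xi>. T \<xi> s2) x = T x (s1 + s2)"
    and lim: "((\<lambda>s. l1norm (\<lambda>x. T x s - ddelta x)) \<longlongrightarrow> 0) (at_right 0)"
    using K unfolding pre_scale_space_kernels_def by (auto intro: abs_summable_real)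
  define U where "U s = Abs_l1 (\<lambda>x. T x s)" for s
  have fnU: "l1_fn (U s) = (\<lambda>x. T x s)" if "s \<ge> 0" for s
    unfolding U_def using summ[OF that] by (simp add: Abs_l1_inverse)
  have semi: "U (s + t) = U s * U t" if "s \<ge> 0" "t \<ge> 0" for s t
  proof -
    have "l1_fn (U (s + t)) = l1_fn (U s * U t)"
      using that sg[of s t] by (auto simp: fun_eq_iff fnU l1_fn_times dconv_def)
    then show ?thesis by (simp add: l1_fn_inject)
  qed
  have U0: "U 0 = 1"
  proof -
    have "l1_fn (U 0) = l1_fn 1" by (auto simp: fun_eq_iff fnU l1_fn_one T0 ddelta_def)
    then show ?thesis by (simp add: l1_fn_inject)
  qed
  have cont0: "((\<lambda>s. norm (U s - 1)) \<longlongrightarrow> 0) (at_right 0)"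
  proof (rule Lim_transform_eventually[OF lim])
    show "\<forall>\<^sub>F s in at_right 0. l1norm (\<lambda>x. T x s - ddelta x) = norm (U s - 1)"
      unfolding eventually_at_right_field
      by (rule exI[of _ 1]) (auto simp: norm_l1.rep_eq l1_fn_diff fnU l1_fn_one l1norm_def ddelta_def)
  qed
  obtain A where A: "\<And>s. s \<ge> 0 \<Longrightarrow> (U has_vector_derivative U s * A) (at s within {0..})"
    using semigroup_deriv[OF semi U0 cont0] by blast
  have P1: "((\<lambda>t. pre_scale_space_rep T f x t) has_real_derivative
          (\<Sum>\<^sub>\<infinity>\<xi>. l1_fn A (- \<xi>) * pre_scale_space_rep T f (x + \<xi>) s)) (at s within {0..})"
    if f: "f summable_on UNIV" and s: "s \<ge> 0" for f x s
  proof -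
    define F where "F = Abs_l1 f"
    have fnF: "l1_fn F = f" unfolding F_def using f by (simp add: Abs_l1_inverse)
    have rep: "pre_scale_space_rep T f y t = l1_fn (U t * F) y" if "t \<ge> 0" for y t
      using that by (simp add: pre_scale_space_rep_def l1_fn_times fnU fnF)
    have bl: "bounded_linear (\<lambda>g. l1_fn (g * F) x)"
      using bounded_linear_compose[OF bounded_linear_l1_fn bounded_linear_mult_left] .
    have "((\<lambda>t. l1_fn (U t * F) x) has_vector_derivative l1_fn (U s * A * F) x) (at s within {0..})"
      using bounded_linear.has_vector_derivative[OF bl A[OF s]] .
    then have "((\<lambda>t. pre_scale_space_rep T f x t) has_vector_derivative l1_fn (U s * A * F) x) (at s within {0..})"
      by (rule has_vector_derivative_transform[rotated 2]) (use s rep in auto)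
    moreover have "l1_fn (U s * A * F) x = (\<Sum>\<^sub>\<infinity>\<xi>. l1_fn A (- \<xi>) * pre_scale_space_rep T f (x + \<xi>) s)"
    proof -
      have "l1_fn (U s * A * F) x = l1_fn (A * (U s * F)) x" by (simp add: ac_simps)
      also have "\<dots> = (\<Sum>\<^sub>\<infinity>\<xi>. l1_fn A \<xi> * pre_scale_space_rep T f (x - \<xi>) s)"
        by (simp add: l1_fn_times rep[OF s])
      also have "\<dots> = (\<Sum>\<^sub>\<infinity>\<xi>. l1_fn A (- \<xi>) * pre_scale_space_rep T f (x + \<xi>) s)"
        using infsum_reindex_bij_betw[OF bij_uminus_g, of "\<lambda>\<xi>. l1_fn A (- \<xi>) * pre_scale_space_rep T f (x + \<xi>) s"]
        by simp
      finally show ?thesis .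
    qed
    ultimately show ?thesis by (simp add: has_real_derivative_iff_has_vector_derivative)
  qed
  have P2: "((\<lambda>t. T y t) has_real_derivative l1_fn A y) (at 0 within {0..})" for y
  proof -
    have "((\<lambda>t. l1_fn (U t) y) has_vector_derivative l1_fn A y) (at 0 within {0..})"
      using bounded_linear.has_vector_derivative[OF bounded_linear_l1_fn A[of 0]] by (simp add: U0)
    then have "((\<lambda>t. T y t) has_vector_derivative l1_fn A y) (at 0 within {0..})"
      by (rule has_vector_derivative_transform[rotated 2]) (auto simp: fnU)
    then show ?thesis by (simp add: has_real_derivative_iff_has_vector_derivative)
  qed
  show ?thesis using P1 P2 by blast
qed

theorem theoremA7:
  fixes T :: "int ^ 'n::finite \<Rightarrow> real \<Rightarrow> real" and f :: "int ^ 'n \<Rightarrow> real"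
  assumes "scale_space_kernels T"
    and "(\<lambda>x. \<bar>f x\<bar>) summable_on UNIV"
  shows "\<exists>a :: int ^ 'n \<Rightarrow> real.
           (\<forall>\<xi>. linf \<xi> > 1 \<longrightarrow> a \<xi> = 0) \<and>
           (\<forall>\<xi>. \<xi> \<noteq> 0 \<longrightarrow> a \<xi> \<ge> 0) \<and>
           (\<Sum>\<^sub>\<infinity>\<xi>. a \<xi>) = 0 \<and>
           (\<forall>x. \<forall>s\<ge>0. ((\<lambda>t. pre_scale_space_rep T f x t) has_real_derivative
                 (\<Sum>\<^sub>\<infinity>\<xi>. a \<xi> * pre_scale_space_rep T f (x + \<xi>) s)) (at s within {0..})) \<and>
           (\<forall>x. pre_scale_space_rep T f x 0 = f x)"
proof -
  have K: "pre_scale_space_kernels T"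
    and props: "\<And>g :: int ^ 'n \<Rightarrow> real. (\<lambda>x. \<bar>g x\<bar>) summable_on UNIV \<Longrightarrow>
        has_pre_scale_space_props (pre_scale_space_rep T g)"
    using assms(1) unfolding scale_space_kernels_def by auto
  have T0: "\<And>x. T x 0 = ddelta x" using K unfolding pre_scale_space_kernels_def by auto
  obtain A :: "(int ^ 'n) l1" where
    D: "\<And>g x s. g summable_on UNIV \<Longrightarrow> s \<ge> 0 \<Longrightarrow>
        ((\<lambda>t. pre_scale_space_rep T g x t) has_real_derivative
          (\<Sum>\<^sub>\<infinity>\<xi>. l1_fn A (- \<xi>) * pre_scale_space_rep T g (x + \<xi>) s)) (at s within {0..})"
    and D0: "\<And>y. ((\<lambda>t. T y t) has_real_derivative l1_fn A y) (at 0 within {0..})"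
    using kernel_deriv[OF K] by blast
  define a where "a \<xi> = l1_fn A (- \<xi>)" for \<xi>
  have dsum: "ddelta summable_on UNIV" by (simp add: ddelta_one_fn one_fn_summable)
  have pd: "has_pre_scale_space_props (pre_scale_space_rep T ddelta)"
    by (rule props) (rule summable_abs_real[OF dsum])
  have D0': "((\<lambda>t. pre_scale_space_rep T ddelta y t) has_real_derivative l1_fn A y) (at 0 within {0..})" for y
    using D0[of y] by (simp add: rep_delta)
  have loc: "a \<xi> = 0" if "linf \<xi> > 1" for \<xi>
  proof -
    define y where "y = - \<xi>"
    have ly: "linf y > 1" using that by (simp add: y_def linf_uminus)
    have y0: "y \<noteq> 0" using ly by (auto simp: linf_zero)
    have nb: "x \<noteq> 0" if "linf (x - y) = 1" for x
      using that ly by (auto simp: linf_uminus)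
    have c1: "\<forall>x. linf (x - y) = 1 \<longrightarrow> pre_scale_space_rep T ddelta x 0 \<le> pre_scale_space_rep T ddelta y 0"
     and c2: "\<forall>x. linf (x - y) = 1 \<longrightarrow> pre_scale_space_rep T ddelta x 0 \<ge> pre_scale_space_rep T ddelta y 0"
      unfolding rep_delta T0 using nb y0 by (auto simp: ddelta_def)
    have "l1_fn A y \<le> 0"
      by (rule props_use(1)[OF pd _ D0'[of y] c1]) simp
    moreover have "l1_fn A y \<ge> 0"
      by (rule props_use(2)[OF pd _ D0'[of y] c2]) simp
    ultimately show ?thesis by (simp add: a_def y_def)
  qed
  have pos: "a \<xi> \<ge> 0" if "\<xi> \<noteq> 0" for \<xi>
  proof -
    have y0: "- \<xi> \<noteq> 0" using that by simp
    have c2: "\<forall>x. linf (x - (- \<xi>)) = 1 \<longrightarrow> pre_scale_space_rep T ddelta x 0 \<ge> pre_scale_space_rep T ddelta (- \<xi>) 0"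
      unfolding rep_delta T0 using y0 by (auto simp: ddelta_def)
    have "l1_fn A (- \<xi>) \<ge> 0"
      by (rule props_use(2)[OF pd _ D0'[of "- \<xi>"] c2]) simp
    then show ?thesis by (simp add: a_def)
  qed
  define g :: "int ^ 'n \<Rightarrow> real" where "g x = (if linf x \<le> 1 then 1 else 0)" for x
  have gsum: "g summable_on UNIV"
  proof -
    have "g summable_on UNIV \<longleftrightarrow> g summable_on {x. linf x \<le> 1}"
      by (rule summable_on_cong_neutral) (auto simp: g_def)
    moreover have "finite {x :: int ^ 'n. linf x \<le> 1}" by (rule finite_linf_le1)
    ultimately show ?thesis by (simp add: summable_on_finite)
  qed
  have zs: "(\<Sum>\<^sub>\<infinity>\<xi>. a \<xi>) = 0"
  proof -
    have pg: "has_pre_scale_space_props (pre_scale_space_rep T g)"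
      by (rule props) (rule summable_abs_real[OF gsum])
    define d where "d = (\<Sum>\<^sub>\<infinity>\<xi>. l1_fn A (- \<xi>) * pre_scale_space_rep T g (0 + \<xi>) 0)"
    have dd: "((\<lambda>t. pre_scale_space_rep T g 0 t) has_real_derivative d) (at 0 within {0..})"
      unfolding d_def by (rule D[OF gsum]) simp
    have nb: "g x = 1" if "linf (x - 0) = 1" for x
      using that by (simp add: g_def)
    have c1: "\<forall>x. linf (x - 0) = 1 \<longrightarrow> pre_scale_space_rep T g x 0 \<le> pre_scale_space_rep T g 0 0"
     and c2: "\<forall>x. linf (x - 0) = 1 \<longrightarrow> pre_scale_space_rep T g x 0 \<ge> pre_scale_space_rep T g 0 0"
      unfolding rep_at_0[of T, OF T0] using nb by (auto simp: g_def linf_zero)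
    have "d \<le> 0"
      by (rule props_use(1)[OF pg _ dd c1]) simp
    moreover have "d \<ge> 0"
      by (rule props_use(2)[OF pg _ dd c2]) simp
    ultimately have "d = 0" by simp
    moreover have "d = (\<Sum>\<^sub>\<infinity>\<xi>. a \<xi>)"
      unfolding d_def
      by (rule infsum_cong) (auto simp: rep_at_0[of T, OF T0] g_def a_def[symmetric] loc)
    ultimately show ?thesis by simp
  qed
  have fs: "f summable_on UNIV" by (rule abs_summable_real[OF assms(2)])
  show ?thesis
  proof (intro exI[of _ a] conjI allI impI)
    show "\<And>\<xi>. 1 < linf \<xi> \<Longrightarrow> a \<xi> = 0" by (rule loc)
    show "\<And>\<xi>. \<xi> \<noteq> 0 \<Longrightarrow> 0 \<le> a \<xi>" by (rule pos)
    show "(\<Sum>\<^sub>\<infinity>\<xi>. a \<xi>) = 0" by (rule zs)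
    show "\<And>x s. 0 \<le> s \<Longrightarrow> ((\<lambda>t. pre_scale_space_rep T f x t) has_real_derivative
                 (\<Sum>\<^sub>\<infinity>\<xi>. a \<xi> * pre_scale_space_rep T f (x + \<xi>) s)) (at s within {0..})"
      unfolding a_def by (rule D[OF fs])
    show "\<And>x. pre_scale_space_rep T f x 0 = f x" by (rule rep_at_0[of T, OF T0])
  qed
qed

end
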